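(* Let the setting below hold, let $\sigma,\tau>0$ satisfy $\sigma\tau\|A\|^2+\tau L\le 1$, and let $(x^{(k)},z^{(k)})$ be generated either by the Bregman primal Condat--V\~u algorithm \[x^{(k+1)}=\mathrm{prox}^{\phi_{\mathrm p}}_{\tau f}\big(x^{(k)},\tau A^Tz^{(k)}+\tau\nabla h(x^{(k)})\big),\quad z^{(k+1)}=\mathrm{prox}^{\phi_{\mathrm d}}_{\sigma g^*}\big(z^{(k)},-\sigma A(2x^{(k+1)}-x^{(k)})\big),\] in which case set $d=d_-$, $\tilde d=d_{\mathrm{pcv}}$; or by the Bregman dual Condat--V\~u algorithm \[z^{(k+1)}=\mathrm{prox}^{\phi_{\mathrm d}}_{\sigma g^*}\big(z^{(k)},-\sigma Ax^{(k)}\big),\quad x^{(k+1)}=\mathrm{prox}^{\phi_{\mathrm p}}_{\tau f}\big(x^{(k)},\tau A^T(2z^{(k+1)}-z^{(k)})+\tau\nabla h(x^{(k)})\big),\] in which case set $d=d_+$, $\tilde d=d_{\mathrm{dcv}}$; in both cases starting from $x^{(0)}\in\operatorname{int}(\operatorname{dom}\phi_{\mathrm p})\cap\operatorname{dom} h$, $z^{(0)}\in\operatorname{int}(\operatorname{dom}\phi_{\mathrm d})$. Then for every $k\ge0$, all $x\in\operatorname{dom} f\cap\operatorname{dom}\phi_{\mathrm p}$ and all $z\in\operatorname{dom} g^*\cap\operatorname{dom}\phi_{\mathrm d}$, \[\mathcal L(x^{(k+1)},z)-\mathcal L(x,z^{(k+1)})\le d(x,z;x^{(k)},z^{(k)})-d(x,z;x^{(k+1)},z^{(k+1)})-\tilde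 d(x^{(k+1)},z^{(k+1)};x^{(k)},z^{(k)}).\]
   Context: Setting: $f:\mathbb R^n\to\mathbb R\cup\{+\infty\}$, $g:\mathbb R^m\to\mathbb R\cup\{+\infty\}$, $h$ are closed convex functions, $h$ differentiable on its open convex domain, $f+h$ and $g$ proper, $A\in\mathbb R^{m\times n}$; $g^*$ is the conjugate of $g$. Lagrangian: $\mathcal L(x,z)=f(x)+h(x)+\langle z,Ax\rangle-g^*(z)$ (with value $+\infty$ if $x\notin\operatorname{dom}(f+h)$ and $-\infty$ if $x\in\operatorname{dom}(f+h)$, $z\notin\operatorname{dom}g^*$). A Bregman kernel $\phi$ is convex with $\operatorname{int}(\operatorname{dom}\phi)\neq\emptyset$, continuous on $\operatorname{dom}\phi$, continuously differentiable on $\operatorname{int}(\operatorname{dom}\phi)$; its distance is $d(x,y)=\phi(x)-\phi(y)-\langle\nabla\phi(y),x-y\rangle$ on $\operatorname{dom}\phi\times\operatorname{int}(\operatorname{dom}\phi)$, and $\mathrm{prox}^\phi_F(y,a)=\operatorname{argmin}_x\big(F(x)+\langle a,x\rangle+d(x,y)\big)$, assumed for every $a$ and $y\in\operatorname{int}(\operatorname{dom}\phi)$ to be a unique point of $\operatorname{int}(\operatorname{dom}\phi)$. Kernels $\phi_{\mathrm p}$ on $\mathbb R^n$ and $\phi_{\mathrm d}$ on $\mathbb R^m$ have distances $d_{\mathrm p},d_{\mathrm d}$ with $d_{\mathrm p}(x,x')\ge\frac12\|x-x'\|_{\mathrm p}^2$, $d_{\mathrm d}(z,z')\ge\frac12\|z-z'\|_{\mathrm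 d}^2$ for norms $\|\cdot\|_{\mathrm p},\|\cdot\|_{\mathrm d}$. Also $\operatorname{dom}\phi_{\mathrm p}\subseteq\operatorname{dom}h$ and $h(x)-h(x')-\langle\nabla h(x'),x-x'\rangle\le L\,d_{\mathrm p}(x,x')$ for all $(x,x')\in\operatorname{dom}d_{\mathrm p}$, for some $L>0$. $\|A\|=\sup_{u\ne0,v\ne0}\langle v,Au\rangle/(\|v\|_{\mathrm d}\|u\|_{\mathrm p})$. The optimality conditions $0\in\partial f(x)+\nabla h(x)+A^Tz$, $0\in\partial g^*(z)-Ax$ have a solution $(x^\star,z^\star)\in\operatorname{dom}\phi_{\mathrm p}\times\operatorname{dom}\phi_{\mathrm d}$. Distances: $d_\pm(x,z;x',z')=\frac1\tau d_{\mathrm p}(x,x')+\frac1\sigma d_{\mathrm d}(z,z')\pm\langle z-z',A(x-x')\rangle$, $d_{\mathrm{pcv}}(x,z;x',z')=d_-(x,z;x',z')-h(x)+h(x')+\langle\nabla h(x'),x-x'\rangle$, $d_{\mathrm{dcv}}(x,z;x',z')=d_+(x,z;x',z')-h(x)+h(x')+\langle\nabla h(x'),x-x'\rangle$. *)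

theory Defs
  imports "HOL-Analysis.Analysis" "HOL-Library.Extended_Real"
begin

definition edom :: "('a \<Rightarrow> ereal) \<Rightarrow> 'a set" where
  "edom F = {x. F x < \<infinity>}"

definition epigraph :: "('a \<Rightarrow> ereal) \<Rightarrow> ('a \<times> real) set" where
  "epigraph F = {(x, t). F x \<le> ereal t}"

definition econvex :: "('a::real_vector \<Rightarrow> ereal) \<Rightarrow> bool" where
  "econvex F \<longleftrightarrow> convex (epigraph F)"

definition closed_convex_fun :: "('a::real_normed_vector \<Rightarrow> ereal) \<Rightarrow> bool" where
  "closed_convex_fun F \<longleftrightarrow> convex (epigraph F) \<and> closed (epigraph F)"

definition eproper :: "('a \<Rightarrow> ereal) \<Rightarrow> bool" where
  "eproper F \<longleftrightarrow> (\<forall>x. F x \<noteq> -\<infinity>) \<and> (\<exists>x. F x < \<infinity>)"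

definition econj :: "('a::real_inner \<Rightarrow> ereal) \<Rightarrow> 'a \<Rightarrow> ereal" where
  "econj G z = (SUP y. ereal (z \<bullet> y) - G y)"

definition esubdiff :: "('a::real_inner \<Rightarrow> ereal) \<Rightarrow> 'a \<Rightarrow> 'a set" where
  "esubdiff F x = {s. F x < \<infinity> \<and> (\<forall>y. F y \<ge> F x + ereal (s \<bullet> (y - x)))}"

definition is_norm :: "('a::real_vector \<Rightarrow> real) \<Rightarrow> bool" where
  "is_norm N \<longleftrightarrow> (\<forall>x. N x \<ge> 0 \<and> (N x = 0 \<longleftrightarrow> x = 0)) \<and>
     (\<forall>c x. N (c *\<^sub>R x) = \<bar>c\<bar> * N x) \<and> (\<forall>x y. N (x + y) \<le> N x + N y)"

definition bregman_kernel :: "('a::{real_inner,euclidean_space} \<Rightarrow> ereal) \<Rightarrow> ('a \<Rightarrow> 'a) \<Rightarrow> bool" where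
  "bregman_kernel phi gphi \<longleftrightarrow>
     econvex phi \<and> (\<forall>x. phi x \<noteq> -\<infinity>) \<and> interior (edom phi) \<noteq> {} \<and>
     continuous_on (edom phi) phi \<and>
     (\<forall>y\<in>interior (edom phi). ((\<lambda>x. real_of_ereal (phi x)) has_derivative (\<lambda>v. gphi y \<bullet> v)) (at y)) \<and>
     continuous_on (interior (edom phi)) gphi"

text \<open>Bregman distance \<open>d(x,y)\<close> (meaningful for \<open>x \<in> dom phi\<close>, \<open>y \<in> int dom phi\<close>).\<close>
definition bdist :: "('a::real_inner \<Rightarrow> ereal) \<Rightarrow> ('a \<Rightarrow> 'a) \<Rightarrow> 'a \<Rightarrow> 'a \<Rightarrow> real" where
  "bdist phi gphi x y = real_of_ereal (phi x) - real_of_ereal (phi y) - gphi y \<bullet> (x - y)"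

text \<open>Objective of the Bregman proximal problem; \<open>+\<infinity>\<close> outside \<open>dom phi\<close>, where \<open>d\<close> is undefined.\<close>
definition prox_obj :: "('a::real_inner \<Rightarrow> ereal) \<Rightarrow> ('a \<Rightarrow> 'a) \<Rightarrow> ('a \<Rightarrow> ereal) \<Rightarrow> 'a \<Rightarrow> 'a \<Rightarrow> 'a \<Rightarrow> ereal" where
  "prox_obj phi gphi F y a x =
     (if x \<in> edom phi then F x + ereal (a \<bullet> x + bdist phi gphi x y) else \<infinity>)"

definition bprox :: "('a::real_inner \<Rightarrow> ereal) \<Rightarrow> ('a \<Rightarrow> 'a) \<Rightarrow> ('a \<Rightarrow> ereal) \<Rightarrow> 'a \<Rightarrow> 'a \<Rightarrow> 'a" where
  "bprox phi gphi F y a = (THE x. \<forall>w. prox_obj phi gphi F y a x \<le> prox_obj phi gphi F y a w)"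

definition prox_wellposed :: "('a::real_inner \<Rightarrow> ereal) \<Rightarrow> ('a \<Rightarrow> 'a) \<Rightarrow> ('a \<Rightarrow> ereal) \<Rightarrow> bool" where
  "prox_wellposed phi gphi F \<longleftrightarrow>
     (\<forall>a. \<forall>y\<in>interior (edom phi).
        (\<exists>!x. \<forall>w. prox_obj phi gphi F y a x \<le> prox_obj phi gphi F y a w) \<and>
        bprox phi gphi F y a \<in> interior (edom phi))"

definition opnorm_pd :: "(real^'n \<Rightarrow> real) \<Rightarrow> (real^'m \<Rightarrow> real) \<Rightarrow> real^'n^'m \<Rightarrow> real" where
  "opnorm_pd np nd A = Sup {(v \<bullet> (A *v u)) / (nd v * np u) | u v. u \<noteq> 0 \<and> v \<noteq> 0}"

definition lagr :: "(real^'n \<Rightarrow> ereal) \<Rightarrow> (real^'n \<Rightarrow> ereal) \<Rightarrow> (real^'m \<Rightarrow> ereal) \<Rightarrow> real^'n^'m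
                     \<Rightarrow> real^'n \<Rightarrow> real^'m \<Rightarrow> ereal" where
  "lagr f h g A x z =
     (if x \<notin> edom (\<lambda>x. f x + h x) then \<infinity>
      else if z \<notin> edom (econj g) then -\<infinity>
      else f x + h x + ereal (z \<bullet> (A *v x)) - econj g z)"

definition d_minus :: "real \<Rightarrow> real \<Rightarrow> real^'n^'m \<Rightarrow> (real^'n \<Rightarrow> real^'n \<Rightarrow> real) \<Rightarrow> (real^'m \<Rightarrow> real^'m \<Rightarrow> real)
     \<Rightarrow> real^'n \<Rightarrow> real^'m \<Rightarrow> real^'n \<Rightarrow> real^'m \<Rightarrow> real" where
  "d_minus \<tau> \<sigma> A dp dd x z x' z' = dp x x' / \<tau> + dd z z' / \<sigma> - (z - z') \<bullet> (A *v (x - x'))"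

definition d_plus :: "real \<Rightarrow> real \<Rightarrow> real^'n^'m \<Rightarrow> (real^'n \<Rightarrow> real^'n \<Rightarrow> real) \<Rightarrow> (real^'m \<Rightarrow> real^'m \<Rightarrow> real)
     \<Rightarrow> real^'n \<Rightarrow> real^'m \<Rightarrow> real^'n \<Rightarrow> real^'m \<Rightarrow> real" where
  "d_plus \<tau> \<sigma> A dp dd x z x' z' = dp x x' / \<tau> + dd z z' / \<sigma> + (z - z') \<bullet> (A *v (x - x'))"

definition d_pcv :: "real \<Rightarrow> real \<Rightarrow> real^'n^'m \<Rightarrow> (real^'n \<Rightarrow> real^'n \<Rightarrow> real) \<Rightarrow> (real^'m \<Rightarrow> real^'m \<Rightarrow> real)
     \<Rightarrow> (real^'n \<Rightarrow> ereal) \<Rightarrow> (real^'n \<Rightarrow> real^'n)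
     \<Rightarrow> real^'n \<Rightarrow> real^'m \<Rightarrow> real^'n \<Rightarrow> real^'m \<Rightarrow> real" where
  "d_pcv \<tau> \<sigma> A dp dd h gh x z x' z' = d_minus \<tau> \<sigma> A dp dd x z x' z'
     - real_of_ereal (h x) + real_of_ereal (h x') + gh x' \<bullet> (x - x')"

definition d_dcv :: "real \<Rightarrow> real \<Rightarrow> real^'n^'m \<Rightarrow> (real^'n \<Rightarrow> real^'n \<Rightarrow> real) \<Rightarrow> (real^'m \<Rightarrow> real^'m \<Rightarrow> real)
     \<Rightarrow> (real^'n \<Rightarrow> ereal) \<Rightarrow> (real^'n \<Rightarrow> real^'n)
     \<Rightarrow> real^'n \<Rightarrow> real^'m \<Rightarrow> real^'n \<Rightarrow> real^'m \<Rightarrow> real" where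
  "d_dcv \<tau> \<sigma> A dp dd h gh x z x' z' = d_plus \<tau> \<sigma> A dp dd x z x' z'
     - real_of_ereal (h x) + real_of_ereal (h x') + gh x' \<bullet> (x - x')"

end

theory Submission
  imports Defs
begin

lemma dir_limit:
  fixes P :: "'a::real_inner \<Rightarrow> real"
  assumes "(P has_derivative (\<lambda>v. g \<bullet> v)) (at p)"
  shows "((\<lambda>t. (P (p + t *\<^sub>R w) - P p) / t) \<longlongrightarrow> g \<bullet> w) (at_right 0)"
proof -
  have d: "((\<lambda>t. p + t *\<^sub>R w) has_derivative (\<lambda>t. t *\<^sub>R w)) (at (0::real))"
    by (auto intro!: derivative_eq_intros)
  have a: "(P has_derivative (\<lambda>v. g \<bullet> v)) (at ((\<lambda>t. p + t *\<^sub>R w) 0))" using assms by simp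
  have "((\<lambda>t. P (p + t *\<^sub>R w)) has_derivative (\<lambda>t. g \<bullet> (t *\<^sub>R w))) (at 0)"
    using has_derivative_compose[OF d a] by simp
  then have "((\<lambda>t. P (p + t *\<^sub>R w)) has_field_derivative (g \<bullet> w)) (at 0)"
    unfolding has_field_derivative_def
    by (rule has_derivative_eq_rhs) (auto simp: fun_eq_iff)
  then have "((\<lambda>t. (P (p + t *\<^sub>R w) - P p) / t) \<longlongrightarrow> g \<bullet> w) (at 0)"
    unfolding has_field_derivative_iff by simp
  then show ?thesis by (rule tendsto_within_subset) auto
qed

lemma epi_conv:
  assumes "convex (epigraph F)" "F x = ereal a" "F y = ereal b" "0 \<le> t" "t \<le> 1"
  shows "F (x + t *\<^sub>R (y - x)) \<le> ereal ((1-t)*a + t*b)"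
proof -
  have "(x,a) \<in> epigraph F" "(y,b) \<in> epigraph F" using assms by (auto simp: epigraph_def)
  then have "(1-t) *\<^sub>R (x,a) + t *\<^sub>R (y,b) \<in> epigraph F"
    using assms(4,5) by (intro convexD[OF assms(1)]) auto
  moreover have "x + t *\<^sub>R (y - x) = (1-t) *\<^sub>R x + t *\<^sub>R y" by (simp add: algebra_simps)
  ultimately show ?thesis by (simp add: epigraph_def)
qed

lemma prox_3pt:
  fixes phi :: "'a::euclidean_space \<Rightarrow> ereal"
  assumes kern: "bregman_kernel phi gphi"
    and p: "p \<in> interior (edom phi)"
    and minp: "\<forall>w. prox_obj phi gphi F y a p \<le> prox_obj phi gphi F y a w"
    and w: "w \<in> edom phi"
    and Fw: "F w = ereal fw" and Fp: "F p = ereal fp"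
    and conv: "\<forall>t. 0 < t \<longrightarrow> t < 1 \<longrightarrow> F (p + t *\<^sub>R (w - p)) \<le> ereal ((1-t)*fp + t*fw)"
  shows "fp + a \<bullet> p + bdist phi gphi p y + bdist phi gphi w p \<le> fw + a \<bullet> w + bdist phi gphi w y"
proof -
  define P where "P x = real_of_ereal (phi x)" for x
  have pd: "p \<in> edom phi" using p interior_subset by blast
  have fin: "phi x = ereal (P x)" if "x \<in> edom phi" for x
    using that kern unfolding P_def bregman_kernel_def edom_def
    by (cases "phi x") auto
  have cvx: "convex (epigraph phi)" using kern by (simp add: bregman_kernel_def econvex_def)
  have der: "(P has_derivative (\<lambda>v. gphi p \<bullet> v)) (at p)"
    using kern p unfolding bregman_kernel_def P_def by blast
  define C where "C = fw - fp + a \<bullet> (w - p) - gphi y \<bullet> (w - p)"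
  have lim: "((\<lambda>t. C + (P (p + t *\<^sub>R (w - p)) - P p) / t) \<longlongrightarrow> C + gphi p \<bullet> (w - p)) (at_right 0)"
    by (intro tendsto_add tendsto_const dir_limit der)
  have ev: "\<forall>\<^sub>F t in at_right 0. 0 \<le> C + (P (p + t *\<^sub>R (w - p)) - P p) / t"
  proof (rule eventually_at_rightI[of 0 1])
    fix t :: real assume t: "t \<in> {0<..<1}"
    define wt where "wt = p + t *\<^sub>R (w - p)"
    have "phi wt \<le> ereal ((1-t) * P p + t * P w)"
      unfolding wt_def using t by (intro epi_conv[OF cvx fin[OF pd] fin[OF w]]) auto
    then have wtd: "wt \<in> edom phi" unfolding edom_def by (auto simp: less_le_trans)
    have "prox_obj phi gphi F y a p \<le> prox_obj phi gphi F y a wt" using minp by blast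
    also have "\<dots> = F wt + ereal (a \<bullet> wt + bdist phi gphi wt y)"
      using wtd by (simp add: prox_obj_def)
    also have "\<dots> \<le> ereal ((1-t)*fp + t*fw) + ereal (a \<bullet> wt + bdist phi gphi wt y)"
      using conv t unfolding wt_def by (intro add_right_mono) auto
    finally have "ereal (fp + (a \<bullet> p + bdist phi gphi p y)) \<le> ereal ((1-t)*fp + t*fw + (a \<bullet> wt + bdist phi gphi wt y))"
      using pd Fp by (simp add: prox_obj_def)
    then have "fp + (a \<bullet> p + bdist phi gphi p y) \<le> (1-t)*fp + t*fw + (a \<bullet> wt + bdist phi gphi wt y)"
      by simp
    then have "0 \<le> t * C + (P wt - P p)"
      unfolding bdist_def C_def wt_def P_def
      by (simp add: algebra_simps inner_diff_right inner_add_right)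
    then have "0 \<le> (t * C + (P wt - P p)) / t" using t by simp
    also have "\<dots> = C + (P wt - P p) / t" using t by (simp add: field_simps)
    finally show "0 \<le> C + (P (p + t *\<^sub>R (w - p)) - P p) / t" unfolding wt_def .
  qed simp
  have "0 \<le> C + gphi p \<bullet> (w - p)"
    by (rule tendsto_lowerbound[OF lim ev]) simp
  then show ?thesis
    unfolding bdist_def C_def P_def
    by (simp add: algebra_simps inner_diff_right inner_add_right)
qed


lemma grad_ineq:
  fixes H :: "'a::real_inner \<Rightarrow> ereal"
  assumes cvx: "convex (epigraph H)" and Hx: "H x = ereal hx" and Hu: "H u = ereal hu"
    and nm: "\<forall>y. H y < \<infinity> \<longrightarrow> H y \<noteq> -\<infinity>"
    and der: "((\<lambda>y. real_of_ereal (H y)) has_derivative (\<lambda>v. g \<bullet> v)) (at x)"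
  shows "hx + g \<bullet> (u - x) \<le> hu"
proof -
  define Q where "Q y = real_of_ereal (H y)" for y
  have lim: "((\<lambda>t. (Q (x + t *\<^sub>R (u - x)) - Q x) / t) \<longlongrightarrow> g \<bullet> (u - x)) (at_right 0)"
    using dir_limit der unfolding Q_def by blast
  have ev: "\<forall>\<^sub>F t in at_right 0. (Q (x + t *\<^sub>R (u - x)) - Q x) / t \<le> hu - hx"
  proof (rule eventually_at_rightI[of 0 1])
    fix t :: real assume t: "t \<in> {0<..<1}"
    have le: "H (x + t *\<^sub>R (u - x)) \<le> ereal ((1-t)*hx + t*hu)"
      using t by (intro epi_conv[OF cvx Hx Hu]) auto
    then have "H (x + t *\<^sub>R (u - x)) < \<infinity>" using le_less_trans by fastforce
    then have "H (x + t *\<^sub>R (u - x)) \<noteq> -\<infinity>" using nm by blast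
    with le have "Q (x + t *\<^sub>R (u - x)) \<le> (1-t)*hx + t*hu"
      unfolding Q_def by (cases "H (x + t *\<^sub>R (u - x))") auto
    then have "Q (x + t *\<^sub>R (u - x)) - Q x \<le> t * (hu - hx)" using Hx unfolding Q_def
      by (simp add: algebra_simps)
    then show "(Q (x + t *\<^sub>R (u - x)) - Q x) / t \<le> hu - hx" using t
      by (simp add: divide_le_eq mult.commute)
  qed simp
  have "g \<bullet> (u - x) \<le> hu - hx" by (rule tendsto_upperbound[OF lim ev]) simp
  then show ?thesis by simp
qed

lemma econj_conv:
  assumes nm: "\<forall>y. g y \<noteq> -\<infinity>" and a: "econj g z = ereal a" and b: "econj g v = ereal b"
    and t: "0 \<le> t" "t \<le> 1"
  shows "econj g (z + t *\<^sub>R (v - z)) \<le> ereal ((1-t)*a + t*b)"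
  unfolding econj_def
proof (rule SUP_least)
  fix y assume "y \<in> (UNIV :: 'a set)"
  show "ereal ((z + t *\<^sub>R (v - z)) \<bullet> y) - g y \<le> ereal ((1-t)*a + t*b)"
  proof (cases "g y")
    case (real r)
    have "ereal (z \<bullet> y) - g y \<le> econj g z" unfolding econj_def by (rule SUP_upper) simp
    then have 1: "z \<bullet> y - r \<le> a" using a real by simp
    have "ereal (v \<bullet> y) - g y \<le> econj g v" unfolding econj_def by (rule SUP_upper) simp
    then have 2: "v \<bullet> y - r \<le> b" using b real by simp
    have "(z + t *\<^sub>R (v - z)) \<bullet> y - r = (1-t)*(z \<bullet> y - r) + t*(v \<bullet> y - r)"
      by (simp add: algebra_simps inner_diff_left inner_add_left)
    also have "\<dots> \<le> (1-t)*a + t*b"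
      using 1 2 t by (intro add_mono mult_left_mono) auto
    finally show ?thesis using real by simp
  qed (use nm in auto)
qed

lemma econj_nm:
  assumes "g y0 = ereal r"
  shows "econj g z \<noteq> -\<infinity>"
proof -
  have "ereal (z \<bullet> y0) - g y0 \<le> econj g z" unfolding econj_def by (rule SUP_upper) simp
  then show ?thesis using assms by auto
qed

lemma bprox_props:
  assumes "prox_wellposed phi gphi F" "y \<in> interior (edom phi)"
  shows "\<forall>w. prox_obj phi gphi F y a (bprox phi gphi F y a) \<le> prox_obj phi gphi F y a w"
    and "bprox phi gphi F y a \<in> interior (edom phi)"
proof -
  have "\<exists>!x. \<forall>w. prox_obj phi gphi F y a x \<le> prox_obj phi gphi F y a w"
    using assms unfolding prox_wellposed_def by blast
  from theI'[OF this] show "\<forall>w. prox_obj phi gphi F y a (bprox phi gphi F y a) \<le> prox_obj phi gphi F y a w"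
    unfolding bprox_def .
  show "bprox phi gphi F y a \<in> interior (edom phi)"
    using assms unfolding prox_wellposed_def by blast
qed

lemma prox_step:
  fixes phi :: "'a::euclidean_space \<Rightarrow> ereal"
  assumes kern: "bregman_kernel phi gphi" and wp: "prox_wellposed phi gphi F"
    and y: "y \<in> interior (edom phi)"
    and w: "w \<in> edom phi" and Fw: "F w = ereal fw"
    and nm: "\<forall>x\<in>edom phi. F x \<noteq> -\<infinity>"
    and conv: "\<forall>x x' a b t. F x = ereal a \<longrightarrow> F x' = ereal b \<longrightarrow> 0 \<le> t \<longrightarrow> t \<le> 1 \<longrightarrow>
                F (x + t *\<^sub>R (x' - x)) \<le> ereal ((1-t)*a + t*b)"
    and p: "p = bprox phi gphi F y a"
  shows "p \<in> interior (edom phi)" "F p = ereal (real_of_ereal (F p))"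
    "real_of_ereal (F p) + a \<bullet> p + bdist phi gphi p y + bdist phi gphi w p
       \<le> fw + a \<bullet> w + bdist phi gphi w y"
proof -
  note bp = bprox_props[OF wp y, of a, folded p]
  show pint: "p \<in> interior (edom phi)" by (rule bp(2))
  have pd: "p \<in> edom phi" using pint interior_subset by blast
  have "prox_obj phi gphi F y a p \<le> prox_obj phi gphi F y a w" using bp(1) by blast
  then have "F p + ereal (a \<bullet> p + bdist phi gphi p y) \<le> ereal (fw + (a \<bullet> w + bdist phi gphi w y))"
    using pd w Fw by (simp add: prox_obj_def)
  then have "F p \<noteq> \<infinity>" by auto
  with nm pd show Fp: "F p = ereal (real_of_ereal (F p))" by (cases "F p") auto
  show "real_of_ereal (F p) + a \<bullet> p + bdist phi gphi p y + bdist phi gphi w p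
       \<le> fw + a \<bullet> w + bdist phi gphi w y"
    by (rule prox_3pt[OF kern pint bp(1) w Fw Fp]) (use conv Fp Fw in auto)
qed


lemma scale_conv:
  fixes G :: "'a::real_vector \<Rightarrow> ereal"
  assumes c: "c > 0"
    and conv: "\<forall>x x' a b t. G x = ereal a \<longrightarrow> G x' = ereal b \<longrightarrow> 0 \<le> t \<longrightarrow> t \<le> 1 \<longrightarrow>
                G (x + t *\<^sub>R (x' - x)) \<le> ereal ((1-t)*a + t*b)"
  shows "\<forall>x x' a b t. ereal c * G x = ereal a \<longrightarrow> ereal c * G x' = ereal b \<longrightarrow> 0 \<le> t \<longrightarrow> t \<le> 1 \<longrightarrow>
                ereal c * G (x + t *\<^sub>R (x' - x)) \<le> ereal ((1-t)*a + t*b)"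
proof (intro allI impI)
  fix x x' a b and t :: real assume a: "ereal c * G x = ereal a" and b: "ereal c * G x' = ereal b"
    and t: "0 \<le> t" "t \<le> 1"
  have ga: "G x = ereal (a/c)" using a c by (cases "G x") (auto split: if_splits)
  have gb: "G x' = ereal (b/c)" using b c by (cases "G x'") (auto split: if_splits)
  have "G (x + t *\<^sub>R (x' - x)) \<le> ereal ((1-t)*(a/c) + t*(b/c))" using conv ga gb t by blast
  then have "ereal c * G (x + t *\<^sub>R (x' - x)) \<le> ereal c * ereal ((1-t)*(a/c) + t*(b/c))"
    using c by (intro ereal_mult_left_mono) auto
  also have "\<dots> = ereal ((1-t)*a + t*b)" using c by (simp add: field_simps)
  finally show "ereal c * G (x + t *\<^sub>R (x' - x)) \<le> ereal ((1-t)*a + t*b)" .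
qed

lemma div_ineq:
  fixes c :: real
  assumes "c > 0" "c * a + b1 \<le> c * a' + b2"
  shows "a + b1 / c \<le> a' + b2 / c"
proof -
  have "(c*a+b1)/c \<le> (c*a'+b2)/c" using assms by (intro divide_right_mono) auto
  moreover have "(c*a+b1)/c = a + b1/c" "(c*a'+b2)/c = a' + b2/c" using assms(1) by (auto simp: field_simps)
  ultimately show ?thesis by simp
qed

lemma alg_primal:
  fixes A :: "real^'n^'m" and x u p :: "real^'n" and z v q :: "real^'m"
  assumes tau: "\<tau> > 0" and sig: "\<sigma> > 0"
    and P3: "\<tau> * fp + (\<tau> *\<^sub>R (transpose A *v z) + \<tau> *\<^sub>R ghx) \<bullet> p + dp p x + dp u p
          \<le> \<tau> * fu + (\<tau> *\<^sub>R (transpose A *v z) + \<tau> *\<^sub>R ghx) \<bullet> u + dp u x"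
    and D3: "\<sigma> * gq + (- (\<sigma> *\<^sub>R (A *v (2 *\<^sub>R p - x)))) \<bullet> q + dd q z + dd v q
          \<le> \<sigma> * gv + (- (\<sigma> *\<^sub>R (A *v (2 *\<^sub>R p - x)))) \<bullet> v + dd v z"
    and H: "real_of_ereal (h x) + ghx \<bullet> (u - x) \<le> real_of_ereal (h u)"
    and ghx: "gh x = ghx"
  shows "fp + real_of_ereal (h p) + v \<bullet> (A *v p) - gv - (fu + real_of_ereal (h u) + q \<bullet> (A *v u) - gq)
    \<le> d_minus \<tau> \<sigma> A dp dd u v x z - d_minus \<tau> \<sigma> A dp dd u v p q - d_pcv \<tau> \<sigma> A dp dd h gh p q x z"
proof -
  have bil: "(transpose A *v zz) \<bullet> ww = zz \<bullet> (A *v ww)" for zz ww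
    by (simp add: transpose_matrix_vector dot_lmul_matrix)
  have e1: "(\<tau> *\<^sub>R (transpose A *v z) + \<tau> *\<^sub>R ghx) \<bullet> w = \<tau> * (z \<bullet> (A *v w)) + \<tau> * (ghx \<bullet> w)" for w
    by (simp add: inner_add_left dot_lmul_matrix)
  have e2: "(- (\<sigma> *\<^sub>R (A *v (2 *\<^sub>R p - x)))) \<bullet> w = \<sigma> * (w \<bullet> (A *v x)) - 2 * \<sigma> * (w \<bullet> (A *v p))" for w
    by (simp add: matrix_vector_mult_diff_distrib matrix_vector_mult_scaleR inner_diff_left inner_commute algebra_simps)
  have P': "(fp + (z \<bullet> (A *v p)) + ghx \<bullet> p) + (dp p x + dp u p) / \<tau> \<le> (fu + (z \<bullet> (A *v u)) + ghx \<bullet> u) + dp u x / \<tau>"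
    using P3 tau by (intro div_ineq) (auto simp: e1 algebra_simps dot_lmul_matrix)
  have D': "(gq + q \<bullet> (A *v x) - 2 * (q \<bullet> (A *v p))) + (dd q z + dd v q) / \<sigma> \<le> (gv + v \<bullet> (A *v x) - 2 * (v \<bullet> (A *v p))) + dd v z / \<sigma>"
    using D3 sig by (intro div_ineq) (auto simp: e2 algebra_simps inner_commute)
  show ?thesis
    using P' D' H unfolding d_minus_def d_pcv_def ghx
    by (simp add: matrix_vector_mult_diff_distrib inner_diff_left inner_diff_right add_divide_distrib)
qed

lemma alg_dual:
  fixes A :: "real^'n^'m" and x u p :: "real^'n" and z v q :: "real^'m"
  assumes tau: "\<tau> > 0" and sig: "\<sigma> > 0"
    and P3: "\<tau> * fp + (\<tau> *\<^sub>R (transpose A *v (2 *\<^sub>R q - z)) + \<tau> *\<^sub>R ghx) \<bullet> p + dp p x + dp u p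
          \<le> \<tau> * fu + (\<tau> *\<^sub>R (transpose A *v (2 *\<^sub>R q - z)) + \<tau> *\<^sub>R ghx) \<bullet> u + dp u x"
    and D3: "\<sigma> * gq + (- (\<sigma> *\<^sub>R (A *v x))) \<bullet> q + dd q z + dd v q
          \<le> \<sigma> * gv + (- (\<sigma> *\<^sub>R (A *v x))) \<bullet> v + dd v z"
    and H: "real_of_ereal (h x) + ghx \<bullet> (u - x) \<le> real_of_ereal (h u)"
    and ghx: "gh x = ghx"
  shows "fp + real_of_ereal (h p) + v \<bullet> (A *v p) - gv - (fu + real_of_ereal (h u) + q \<bullet> (A *v u) - gq)
    \<le> d_plus \<tau> \<sigma> A dp dd u v x z - d_plus \<tau> \<sigma> A dp dd u v p q - d_dcv \<tau> \<sigma> A dp dd h gh p q x z"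
proof -
  have e1: "(\<tau> *\<^sub>R (transpose A *v (2 *\<^sub>R q - z)) + \<tau> *\<^sub>R ghx) \<bullet> w
      = 2 * \<tau> * (q \<bullet> (A *v w)) - \<tau> * (z \<bullet> (A *v w)) + \<tau> * (ghx \<bullet> w)" for w
    by (simp add: inner_add_left dot_lmul_matrix inner_diff_left algebra_simps)
  have e2: "(- (\<sigma> *\<^sub>R (A *v x))) \<bullet> w = - \<sigma> * (w \<bullet> (A *v x))" for w
    by (simp add: inner_commute)
  have P': "(fp + 2 * (q \<bullet> (A *v p)) - (z \<bullet> (A *v p)) + ghx \<bullet> p) + (dp p x + dp u p) / \<tau>
      \<le> (fu + 2 * (q \<bullet> (A *v u)) - (z \<bullet> (A *v u)) + ghx \<bullet> u) + dp u x / \<tau>"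
    using P3 tau by (intro div_ineq) (auto simp: e1 algebra_simps dot_lmul_matrix)
  have D': "(gq - q \<bullet> (A *v x)) + (dd q z + dd v q) / \<sigma> \<le> (gv - v \<bullet> (A *v x)) + dd v z / \<sigma>"
    using D3 sig by (intro div_ineq) (auto simp: e2 algebra_simps inner_commute)
  show ?thesis
    using P' D' H unfolding d_plus_def d_dcv_def ghx
    by (simp add: matrix_vector_mult_diff_distrib inner_diff_left inner_diff_right add_divide_distrib)
qed
theorem mainTheorem3:
  fixes f h :: "real^'n \<Rightarrow> ereal" and g :: "real^'m \<Rightarrow> ereal"
    and gh :: "real^'n \<Rightarrow> real^'n"
    and A :: "real^'n^'m"
    and phip :: "real^'n \<Rightarrow> ereal" and gphip :: "real^'n \<Rightarrow> real^'n"
    and phid :: "real^'m \<Rightarrow> ereal" and gphid :: "real^'m \<Rightarrow> real^'m"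
    and np :: "real^'n \<Rightarrow> real" and nd :: "real^'m \<Rightarrow> real"
    and L \<sigma> \<tau> :: real
    and xs :: "nat \<Rightarrow> real^'n" and zs :: "nat \<Rightarrow> real^'m"
  assumes f_cc: "closed_convex_fun f" and g_cc: "closed_convex_fun g" and h_cc: "closed_convex_fun h"
    and h_dom: "open (edom h)" "convex (edom h)"
    and h_diff: "\<forall>x\<in>edom h. h x \<noteq> -\<infinity> \<and>
                   ((\<lambda>y. real_of_ereal (h y)) has_derivative (\<lambda>v. gh x \<bullet> v)) (at x)"
    and fh_proper: "eproper (\<lambda>x. f x + h x)" and g_proper: "eproper g"
    and kp: "bregman_kernel phip gphip" and kd: "bregman_kernel phid gphid"
    and prox_p: "prox_wellposed phip gphip (\<lambda>x. ereal \<tau> * f x)"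
    and prox_d: "prox_wellposed phid gphid (\<lambda>z. ereal \<sigma> * econj g z)"
    and np_norm: "is_norm np" and nd_norm: "is_norm nd"
    and dp_strong: "\<forall>x\<in>edom phip. \<forall>x'\<in>interior (edom phip). bdist phip gphip x x' \<ge> (np (x - x'))\<^sup>2 / 2"
    and dd_strong: "\<forall>z\<in>edom phid. \<forall>z'\<in>interior (edom phid). bdist phid gphid z z' \<ge> (nd (z - z'))\<^sup>2 / 2"
    and dom_sub: "edom phip \<subseteq> edom h"
    and L_pos: "L > 0"
    and h_smooth: "\<forall>x\<in>edom phip. \<forall>x'\<in>interior (edom phip).
        real_of_ereal (h x) - real_of_ereal (h x') - gh x' \<bullet> (x - x') \<le> L * bdist phip gphip x x'"
    and saddle: "\<exists>xst zst. xst \<in> edom phip \<and> zst \<in> edom phid \<and>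
        0 \<in> {s + gh xst + transpose A *v zst | s. s \<in> esubdiff f xst} \<and>
        0 \<in> {s - A *v xst | s. s \<in> esubdiff (econj g) zst}"
    and \<sigma>_pos: "\<sigma> > 0" and \<tau>_pos: "\<tau> > 0"
    and step: "\<sigma> * \<tau> * (opnorm_pd np nd A)\<^sup>2 + \<tau> * L \<le> 1"
    and x0: "xs 0 \<in> interior (edom phip) \<inter> edom h"
    and z0: "zs 0 \<in> interior (edom phid)"
  shows
    "((\<forall>k. xs (Suc k) = bprox phip gphip (\<lambda>x. ereal \<tau> * f x) (xs k)
                           (\<tau> *\<^sub>R (transpose A *v zs k) + \<tau> *\<^sub>R gh (xs k)) \<and>
           zs (Suc k) = bprox phid gphid (\<lambda>z. ereal \<sigma> * econj g z) (zs k)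
                           (- (\<sigma> *\<^sub>R (A *v (2 *\<^sub>R xs (Suc k) - xs k)))))
      \<longrightarrow> (\<forall>k. \<forall>x\<in>edom f \<inter> edom phip. \<forall>z\<in>edom (econj g) \<inter> edom phid.
            lagr f h g A (xs (Suc k)) z - lagr f h g A x (zs (Suc k))
            \<le> ereal (d_minus \<tau> \<sigma> A (bdist phip gphip) (bdist phid gphid) x z (xs k) (zs k)
                   - d_minus \<tau> \<sigma> A (bdist phip gphip) (bdist phid gphid) x z (xs (Suc k)) (zs (Suc k))
                   - d_pcv \<tau> \<sigma> A (bdist phip gphip) (bdist phid gphid) h gh
                       (xs (Suc k)) (zs (Suc k)) (xs k) (zs k))))
     \<and>
     ((\<forall>k. zs (Suc k) = bprox phid gphid (\<lambda>z. ereal \<sigma> * econj g z) (zs k)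
                           (- (\<sigma> *\<^sub>R (A *v xs k))) \<and>
           xs (Suc k) = bprox phip gphip (\<lambda>x. ereal \<tau> * f x) (xs k)
                           (\<tau> *\<^sub>R (transpose A *v (2 *\<^sub>R zs (Suc k) - zs k)) + \<tau> *\<^sub>R gh (xs k)))
      \<longrightarrow> (\<forall>k. \<forall>x\<in>edom f \<inter> edom phip. \<forall>z\<in>edom (econj g) \<inter> edom phid.
            lagr f h g A (xs (Suc k)) z - lagr f h g A x (zs (Suc k))
            \<le> ereal (d_plus \<tau> \<sigma> A (bdist phip gphip) (bdist phid gphid) x z (xs k) (zs k)
                   - d_plus \<tau> \<sigma> A (bdist phip gphip) (bdist phid gphid) x z (xs (Suc k)) (zs (Suc k))
                   - d_dcv \<tau> \<sigma> A (bdist phip gphip) (bdist phid gphid) h gh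
                       (xs (Suc k)) (zs (Suc k)) (xs k) (zs k))))"
proof -
  have hfin: "h x = ereal (real_of_ereal (h x))" if "x \<in> edom h" for x
  proof -
    have "h x \<noteq> -\<infinity>" using that h_diff by blast
    moreover have "h x < \<infinity>" using that by (simp add: edom_def)
    ultimately
    show ?thesis by (cases "h x") auto
  qed
  have dsub: "x \<in> edom h" if "x \<in> edom phip" for x using that dom_sub by blast
  have fnm: "f x \<noteq> -\<infinity>" if "x \<in> edom phip" for x
  proof
    assume "f x = -\<infinity>"
    moreover have "f x + h x \<noteq> -\<infinity>" using fh_proper unfolding eproper_def by blast
    ultimately show False using hfin[OF dsub[OF that]] by simp
  qed
  have gnm: "\<forall>y. g y \<noteq> -\<infinity>" using g_proper unfolding eproper_def by blast
  obtain y0 where "g y0 < \<infinity>" using g_proper unfolding eproper_def by blast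
  then obtain r0 where "g y0 = ereal r0" using gnm by (cases "g y0") auto
  then have Gnm: "econj g z \<noteq> -\<infinity>" for z by (rule econj_nm)
  have fconv: "\<forall>x x' a b t. f x = ereal a \<longrightarrow> f x' = ereal b \<longrightarrow> 0 \<le> t \<longrightarrow> t \<le> 1 \<longrightarrow>
                f (x + t *\<^sub>R (x' - x)) \<le> ereal ((1-t)*a + t*b)"
    using f_cc epi_conv unfolding closed_convex_fun_def by blast
  have gconv: "\<forall>x x' a b t. econj g x = ereal a \<longrightarrow> econj g x' = ereal b \<longrightarrow> 0 \<le> t \<longrightarrow> t \<le> 1 \<longrightarrow>
                econj g (x + t *\<^sub>R (x' - x)) \<le> ereal ((1-t)*a + t*b)"
    using econj_conv[OF gnm] by blast
  note Fconv = scale_conv[OF \<tau>_pos fconv]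
  note Gconv = scale_conv[OF \<sigma>_pos gconv]
  have Fnm: "\<forall>x\<in>edom phip. ereal \<tau> * f x \<noteq> -\<infinity>"
  proof
    fix x assume "x \<in> edom phip"
    then show "ereal \<tau> * f x \<noteq> -\<infinity>" using fnm \<tau>_pos by (cases "f x") auto
  qed
  have Gnm': "\<forall>x\<in>edom phid. ereal \<sigma> * econj g x \<noteq> -\<infinity>"
  proof
    fix x show "ereal \<sigma> * econj g x \<noteq> -\<infinity>" using Gnm[of x] \<sigma>_pos by (cases "econj g x") auto
  qed
  have hcvx: "convex (epigraph h)" using h_cc unfolding closed_convex_fun_def by blast
  have hnm: "\<forall>y. h y < \<infinity> \<longrightarrow> h y \<noteq> -\<infinity>" using h_diff unfolding edom_def by blast
  have bil: "(transpose A *v zz) \<bullet> ww = zz \<bullet> (A *v ww)" for zz ww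
    by (simp add: transpose_matrix_vector dot_lmul_matrix)
  show ?thesis
  proof (intro conjI impI)
    assume alg: "\<forall>k. xs (Suc k) = bprox phip gphip (\<lambda>x. ereal \<tau> * f x) (xs k)
                           (\<tau> *\<^sub>R (transpose A *v zs k) + \<tau> *\<^sub>R gh (xs k)) \<and>
           zs (Suc k) = bprox phid gphid (\<lambda>z. ereal \<sigma> * econj g z) (zs k)
                           (- (\<sigma> *\<^sub>R (A *v (2 *\<^sub>R xs (Suc k) - xs k))))"
    have inv: "xs k \<in> interior (edom phip) \<and> zs k \<in> interior (edom phid)" for k
    proof (induction k)
      case 0 then show ?case using x0 z0 by blast
    next
      case (Suc k) then show ?case
        using alg bprox_props(2)[OF prox_p] bprox_props(2)[OF prox_d] by metis
    qed
    show "\<forall>k. \<forall>x\<in>edom f \<inter> edom phip. \<forall>z\<in>edom (econj g) \<inter> edom phid.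
            lagr f h g A (xs (Suc k)) z - lagr f h g A x (zs (Suc k))
            \<le> ereal (d_minus \<tau> \<sigma> A (bdist phip gphip) (bdist phid gphid) x z (xs k) (zs k)
                   - d_minus \<tau> \<sigma> A (bdist phip gphip) (bdist phid gphid) x z (xs (Suc k)) (zs (Suc k))
                   - d_pcv \<tau> \<sigma> A (bdist phip gphip) (bdist phid gphid) h gh
                       (xs (Suc k)) (zs (Suc k)) (xs k) (zs k))"
    proof (intro allI ballI)
      fix k u v assume u: "u \<in> edom f \<inter> edom phip" and v: "v \<in> edom (econj g) \<inter> edom phid"
      define x where "x = xs k"
      define z where "z = zs k"
      define p where "p = xs (Suc k)"
      define q where "q = zs (Suc k)"
      have xi: "x \<in> interior (edom phip)" and zi: "z \<in> interior (edom phid)"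
        using inv[of k] unfolding x_def z_def by auto
      have xd: "x \<in> edom phip" using xi interior_subset by blast
      have ud: "u \<in> edom phip" using u by blast
      have vd: "v \<in> edom phid" using v by blast
      have fu: "f u = ereal (real_of_ereal (f u))"
        using u fnm unfolding edom_def by (cases "f u") auto
      have gv: "econj g v = ereal (real_of_ereal (econj g v))"
        using v Gnm unfolding edom_def by (cases "econj g v") auto
      have Fu: "ereal \<tau> * f u = ereal (\<tau> * real_of_ereal (f u))" by (subst fu) simp
      have Gv: "ereal \<sigma> * econj g v = ereal (\<sigma> * real_of_ereal (econj g v))" by (subst gv) simp
      note P = prox_step[OF kp prox_p xi ud Fu Fnm Fconv, where a="\<tau> *\<^sub>R (transpose A *v z) + \<tau> *\<^sub>R gh x" and p=p]
      note D = prox_step[OF kd prox_d zi vd Gv Gnm' Gconv, where a="- (\<sigma> *\<^sub>R (A *v (2 *\<^sub>R p - x)))" and p=q]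
      have pq: "p = bprox phip gphip (\<lambda>x. ereal \<tau> * f x) x (\<tau> *\<^sub>R (transpose A *v z) + \<tau> *\<^sub>R gh x)"
        "q = bprox phid gphid (\<lambda>z. ereal \<sigma> * econj g z) z (- (\<sigma> *\<^sub>R (A *v (2 *\<^sub>R p - x))))"
        using alg unfolding p_def q_def x_def z_def by auto
      have P1: "p \<in> interior (edom phip)" and P2: "ereal \<tau> * f p = ereal (real_of_ereal (ereal \<tau> * f p))"
        and P3: "real_of_ereal (ereal \<tau> * f p) + (\<tau> *\<^sub>R (transpose A *v z) + \<tau> *\<^sub>R gh x) \<bullet> p
            + bdist phip gphip p x + bdist phip gphip u p
          \<le> \<tau> * real_of_ereal (f u) + (\<tau> *\<^sub>R (transpose A *v z) + \<tau> *\<^sub>R gh x) \<bullet> u + bdist phip gphip u x"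
        using P pq by simp_all
      have D1: "q \<in> interior (edom phid)" and D2: "ereal \<sigma> * econj g q = ereal (real_of_ereal (ereal \<sigma> * econj g q))"
        and D3: "real_of_ereal (ereal \<sigma> * econj g q) + (- (\<sigma> *\<^sub>R (A *v (2 *\<^sub>R p - x)))) \<bullet> q
            + bdist phid gphid q z + bdist phid gphid v q
          \<le> \<sigma> * real_of_ereal (econj g v) + (- (\<sigma> *\<^sub>R (A *v (2 *\<^sub>R p - x)))) \<bullet> v + bdist phid gphid v z"
        using D pq by simp_all
      have pd: "p \<in> edom phip" using P1 interior_subset by blast
      define fp where "fp = real_of_ereal (ereal \<tau> * f p) / \<tau>"
      define gq where "gq = real_of_ereal (ereal \<sigma> * econj g q) / \<sigma>"
      have fp: "f p = ereal fp" using P2 \<tau>_pos unfolding fp_def by (cases "f p") auto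
      have gq: "econj g q = ereal gq" using D2 \<sigma>_pos unfolding gq_def by (cases "econj g q") auto
      have fp': "real_of_ereal (ereal \<tau> * f p) = \<tau> * fp" using \<tau>_pos by (simp add: fp_def)
      have gq': "real_of_ereal (ereal \<sigma> * econj g q) = \<sigma> * gq" using \<sigma>_pos by (simp add: gq_def)
      have xh: "x \<in> edom h" using dsub xd .
      have Hx: "h x = ereal (real_of_ereal (h x))" using hfin xh .
      have Hu: "h u = ereal (real_of_ereal (h u))" using hfin dsub ud by blast
      have Hp: "h p = ereal (real_of_ereal (h p))" using hfin dsub pd by blast
      have Hin: "real_of_ereal (h x) + gh x \<bullet> (u - x) \<le> real_of_ereal (h u)"
        by (rule grad_ineq[OF hcvx Hx Hu hnm]) (use h_diff xh in blast)
      have L1: "lagr f h g A p v = ereal (fp + real_of_ereal (h p) + v \<bullet> (A *v p) - real_of_ereal (econj g v))"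
      proof -
        obtain b c where "h p = ereal b" "econj g v = ereal c" using Hp gv by blast
        then show ?thesis using v fp by (simp add: lagr_def edom_def)
      qed
      have L2: "lagr f h g A u q = ereal (real_of_ereal (f u) + real_of_ereal (h u) + q \<bullet> (A *v u) - gq)"
      proof -
        obtain a b where "f u = ereal a" "h u = ereal b" using fu Hu by blast
        then show ?thesis using gq by (simp add: lagr_def edom_def)
      qed
      have R: "fp + real_of_ereal (h p) + v \<bullet> (A *v p) - real_of_ereal (econj g v)
          - (real_of_ereal (f u) + real_of_ereal (h u) + q \<bullet> (A *v u) - gq)
        \<le> d_minus \<tau> \<sigma> A (bdist phip gphip) (bdist phid gphid) u v x z
          - d_minus \<tau> \<sigma> A (bdist phip gphip) (bdist phid gphid) u v p q
          - d_pcv \<tau> \<sigma> A (bdist phip gphip) (bdist phid gphid) h gh p q x z"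
        by (rule alg_primal[where dp="bdist phip gphip" and dd="bdist phid gphid" and h=h and gh=gh, OF \<tau>_pos \<sigma>_pos P3[unfolded fp'] D3[unfolded gq'] Hin refl])
      have "lagr f h g A p v - lagr f h g A u q
        \<le> ereal (d_minus \<tau> \<sigma> A (bdist phip gphip) (bdist phid gphid) u v x z
          - d_minus \<tau> \<sigma> A (bdist phip gphip) (bdist phid gphid) u v p q
          - d_pcv \<tau> \<sigma> A (bdist phip gphip) (bdist phid gphid) h gh p q x z)"
        unfolding L1 L2 using R by simp
      then show "lagr f h g A (xs (Suc k)) v - lagr f h g A u (zs (Suc k))
            \<le> ereal (d_minus \<tau> \<sigma> A (bdist phip gphip) (bdist phid gphid) u v (xs k) (zs k)
                   - d_minus \<tau> \<sigma> A (bdist phip gphip) (bdist phid gphid) u v (xs (Suc k)) (zs (Suc k))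
                   - d_pcv \<tau> \<sigma> A (bdist phip gphip) (bdist phid gphid) h gh
                       (xs (Suc k)) (zs (Suc k)) (xs k) (zs k))"
        unfolding p_def q_def x_def z_def .
    qed
  next
    assume alg: "\<forall>k. zs (Suc k) = bprox phid gphid (\<lambda>z. ereal \<sigma> * econj g z) (zs k)
                           (- (\<sigma> *\<^sub>R (A *v xs k))) \<and>
           xs (Suc k) = bprox phip gphip (\<lambda>x. ereal \<tau> * f x) (xs k)
                           (\<tau> *\<^sub>R (transpose A *v (2 *\<^sub>R zs (Suc k) - zs k)) + \<tau> *\<^sub>R gh (xs k))"
    have inv: "xs k \<in> interior (edom phip) \<and> zs k \<in> interior (edom phid)" for k
    proof (induction k)
      case 0 then show ?case using x0 z0 by blast
    next
      case (Suc k) then show ?case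
        using alg bprox_props(2)[OF prox_p] bprox_props(2)[OF prox_d] by metis
    qed
    show "\<forall>k. \<forall>x\<in>edom f \<inter> edom phip. \<forall>z\<in>edom (econj g) \<inter> edom phid.
            lagr f h g A (xs (Suc k)) z - lagr f h g A x (zs (Suc k))
            \<le> ereal (d_plus \<tau> \<sigma> A (bdist phip gphip) (bdist phid gphid) x z (xs k) (zs k)
                   - d_plus \<tau> \<sigma> A (bdist phip gphip) (bdist phid gphid) x z (xs (Suc k)) (zs (Suc k))
                   - d_dcv \<tau> \<sigma> A (bdist phip gphip) (bdist phid gphid) h gh
                       (xs (Suc k)) (zs (Suc k)) (xs k) (zs k))"
    proof (intro allI ballI)
      fix k u v assume u: "u \<in> edom f \<inter> edom phip" and v: "v \<in> edom (econj g) \<inter> edom phid"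
      define x where "x = xs k"
      define z where "z = zs k"
      define p where "p = xs (Suc k)"
      define q where "q = zs (Suc k)"
      have xi: "x \<in> interior (edom phip)" and zi: "z \<in> interior (edom phid)"
        using inv[of k] unfolding x_def z_def by auto
      have xd: "x \<in> edom phip" using xi interior_subset by blast
      have ud: "u \<in> edom phip" using u by blast
      have vd: "v \<in> edom phid" using v by blast
      have fu: "f u = ereal (real_of_ereal (f u))"
        using u fnm unfolding edom_def by (cases "f u") auto
      have gv: "econj g v = ereal (real_of_ereal (econj g v))"
        using v Gnm unfolding edom_def by (cases "econj g v") auto
      have Fu: "ereal \<tau> * f u = ereal (\<tau> * real_of_ereal (f u))" by (subst fu) simp
      have Gv: "ereal \<sigma> * econj g v = ereal (\<sigma> * real_of_ereal (econj g v))" by (subst gv) simp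
      note P = prox_step[OF kp prox_p xi ud Fu Fnm Fconv, where a="\<tau> *\<^sub>R (transpose A *v (2 *\<^sub>R q - z)) + \<tau> *\<^sub>R gh x" and p=p]
      note D = prox_step[OF kd prox_d zi vd Gv Gnm' Gconv, where a="- (\<sigma> *\<^sub>R (A *v x))" and p=q]
      have pq: "p = bprox phip gphip (\<lambda>x. ereal \<tau> * f x) x (\<tau> *\<^sub>R (transpose A *v (2 *\<^sub>R q - z)) + \<tau> *\<^sub>R gh x)"
        "q = bprox phid gphid (\<lambda>z. ereal \<sigma> * econj g z) z (- (\<sigma> *\<^sub>R (A *v x)))"
        using alg unfolding p_def q_def x_def z_def by auto
      have P1: "p \<in> interior (edom phip)" and P2: "ereal \<tau> * f p = ereal (real_of_ereal (ereal \<tau> * f p))"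
        and P3: "real_of_ereal (ereal \<tau> * f p) + (\<tau> *\<^sub>R (transpose A *v (2 *\<^sub>R q - z)) + \<tau> *\<^sub>R gh x) \<bullet> p
            + bdist phip gphip p x + bdist phip gphip u p
          \<le> \<tau> * real_of_ereal (f u) + (\<tau> *\<^sub>R (transpose A *v (2 *\<^sub>R q - z)) + \<tau> *\<^sub>R gh x) \<bullet> u + bdist phip gphip u x"
        using P pq by simp_all
      have D1: "q \<in> interior (edom phid)" and D2: "ereal \<sigma> * econj g q = ereal (real_of_ereal (ereal \<sigma> * econj g q))"
        and D3: "real_of_ereal (ereal \<sigma> * econj g q) + (- (\<sigma> *\<^sub>R (A *v x))) \<bullet> q
            + bdist phid gphid q z + bdist phid gphid v q
          \<le> \<sigma> * real_of_ereal (econj g v) + (- (\<sigma> *\<^sub>R (A *v x))) \<bullet> v + bdist phid gphid v z"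
        using D pq by simp_all
      have pd: "p \<in> edom phip" using P1 interior_subset by blast
      define fp where "fp = real_of_ereal (ereal \<tau> * f p) / \<tau>"
      define gq where "gq = real_of_ereal (ereal \<sigma> * econj g q) / \<sigma>"
      have fp: "f p = ereal fp" using P2 \<tau>_pos unfolding fp_def by (cases "f p") auto
      have gq: "econj g q = ereal gq" using D2 \<sigma>_pos unfolding gq_def by (cases "econj g q") auto
      have fp': "real_of_ereal (ereal \<tau> * f p) = \<tau> * fp" using \<tau>_pos by (simp add: fp_def)
      have gq': "real_of_ereal (ereal \<sigma> * econj g q) = \<sigma> * gq" using \<sigma>_pos by (simp add: gq_def)
      have xh: "x \<in> edom h" using dsub xd .
      have Hx: "h x = ereal (real_of_ereal (h x))" using hfin xh .
      have Hu: "h u = ereal (real_of_ereal (h u))" using hfin dsub ud by blast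
      have Hp: "h p = ereal (real_of_ereal (h p))" using hfin dsub pd by blast
      have Hin: "real_of_ereal (h x) + gh x \<bullet> (u - x) \<le> real_of_ereal (h u)"
        by (rule grad_ineq[OF hcvx Hx Hu hnm]) (use h_diff xh in blast)
      have L1: "lagr f h g A p v = ereal (fp + real_of_ereal (h p) + v \<bullet> (A *v p) - real_of_ereal (econj g v))"
      proof -
        obtain b c where "h p = ereal b" "econj g v = ereal c" using Hp gv by blast
        then show ?thesis using v fp by (simp add: lagr_def edom_def)
      qed
      have L2: "lagr f h g A u q = ereal (real_of_ereal (f u) + real_of_ereal (h u) + q \<bullet> (A *v u) - gq)"
      proof -
        obtain a b where "f u = ereal a" "h u = ereal b" using fu Hu by blast
        then show ?thesis using gq by (simp add: lagr_def edom_def)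
      qed
      have R: "fp + real_of_ereal (h p) + v \<bullet> (A *v p) - real_of_ereal (econj g v)
          - (real_of_ereal (f u) + real_of_ereal (h u) + q \<bullet> (A *v u) - gq)
        \<le> d_plus \<tau> \<sigma> A (bdist phip gphip) (bdist phid gphid) u v x z
          - d_plus \<tau> \<sigma> A (bdist phip gphip) (bdist phid gphid) u v p q
          - d_dcv \<tau> \<sigma> A (bdist phip gphip) (bdist phid gphid) h gh p q x z"
        by (rule alg_dual[where dp="bdist phip gphip" and dd="bdist phid gphid" and h=h and gh=gh, OF \<tau>_pos \<sigma>_pos P3[unfolded fp'] D3[unfolded gq'] Hin refl])
      have "lagr f h g A p v - lagr f h g A u q
        \<le> ereal (d_plus \<tau> \<sigma> A (bdist phip gphip) (bdist phid gphid) u v x z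
          - d_plus \<tau> \<sigma> A (bdist phip gphip) (bdist phid gphid) u v p q
          - d_dcv \<tau> \<sigma> A (bdist phip gphip) (bdist phid gphid) h gh p q x z)"
        unfolding L1 L2 using R by simp
      then show "lagr f h g A (xs (Suc k)) v - lagr f h g A u (zs (Suc k))
            \<le> ereal (d_plus \<tau> \<sigma> A (bdist phip gphip) (bdist phid gphid) u v (xs k) (zs k)
                   - d_plus \<tau> \<sigma> A (bdist phip gphip) (bdist phid gphid) u v (xs (Suc k)) (zs (Suc k))
                   - d_dcv \<tau> \<sigma> A (bdist phip gphip) (bdist phid gphid) h gh
                       (xs (Suc k)) (zs (Suc k)) (xs k) (zs k))"
        unfolding p_def q_def x_def z_def .
    qed
  qed
qed

end
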